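(* Let $\mathcal Q$ be the set of infinite arrays $q^\infty=(q(b:\cdot))_{b\ge1}$ of coefficient families satisfying the backward recursions (BR) for all $b$ and having $q(2:1)>0$. For $q^\infty\in\mathcal Q$, let $p_{q^\infty}$ be the EPPF of the final partition $(E_n)_{n\ge1}$ associated with the consistent freeze-and-merge operators defined by $q^\infty$. Equivalently, $p_{q^\infty}$ is the EPPF of the exchangeable random partition of $\mathbb N$ satisfying Möhle's recursion with coefficients $q(n:\cdot)$ for all $n$. Then the map $q^\infty\mapsto p_{q^\infty}$ is injective on $\mathcal Q$, hence a bijection onto its image.
   Context: Coefficient families. $q(1:\cdot)=\{q(1:1)\}=\{1\}$. For $b\ge2$, a coefficient family $q(b:\cdot)$ is a collection of nonnegative reals consisting of: - a number $q(b:1)$; - a number $q(b:k_1,\dots,k_r;s)$ for each multiset $\{k_1,\dots,k_r\}$ with $r\ge1$, $k_i\ge2$, $s=b-\sum k_i\ge0$; such that all these numbers sum to $1$. Backward recursions (BR). The first recursion holds for all $b\ge2$, with $l_j=\#\{i:k_i=j\}$ and the $q(b+1:\dots,2;s-1)$ term read as $0$ if $s=0$: $$\begin{aligned}q(b:k_1,\dots,k_r;s)={}&\sum_{i=1}^r\frac{(k_i+1)(l_{k_i+1}+1)}{(b+1)l_{k_i}}q(b+1:k_1,\dots,k_i+1,\dots,k_r;s)+\frac{2(l_2+1)}{b+1}q(b+1:k_1,\dots,k_r,2;s-1)\\&+\frac{s+1}{b+1}q(b+1:k_1,\dots,k_r;s+1)+\frac{q(b+1:1)+2q(b+1:2;b-1)}{b+1}q(b:k_1,\dots,k_r;s).\end{aligned}$$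 The second recursion holds for all $b\ge1$: $$q(b:1)=\frac b{b+1}q(b+1:1)+\frac{q(b+1:1)+2q(b+1:2;b-1)}{b+1}q(b:1).$$ Partitions and EPPF. A partition of a finite set is an unordered collection of nonempty pairwise disjoint blocks with union the set. A composition of $m$ is a sequence of positive integers summing to $m$, and $\mathcal C_m$ is the set of compositions of $m$. An exchangeable random partition of $\mathbb N$ is a sequence $(\Pi_n)$ of random partitions $\Pi_n$ of $[n]=\{1,\dots,n\}$, each with law invariant under permutations of $[n]$, such that $\Pi_n$ restricted to $[m]$ equals $\Pi_m$. Its EPPF $p$ on $\bigcup_m\mathcal C_m$ is defined by $\mathbb P(\Pi_m=\{A_1,\dots,A_\ell\})=p(|A_1|,\dots,|A_\ell|)$. Collisions. For integers $b\ge2$, $r\ge1$, $k_1,\dots,k_r\ge2$, $s\ge0$ with $s+\sum k_i=b$, a $(b;k_1,\dots,k_r;s)$-collision of $b$ blocks leaves $s$ blocks unchanged and divides the others into $r$ unordered groups of $k_1,\dots,k_r$ blocks, each merged into one block. Their number is $d(b;k_1,\dots,k_r;s)=\frac{b!}{s!\prod_{j=2}^b(j!)^{l_j}l_j!}$. Freeze-and-merge operators. A partially frozen partition of $[m]$ is a partition of $[m]$ whose blocks are each labeled "active" or "frozen". $\Sigma^*_m$ is the all-singletons, all-active partition of $[m]$. $\mathrm{FM}_m$ acts on a partially frozen partition with $b$ active blocks as follows. If $b=0$, it does nothing. Otherwise: - with probability $q(b:k_1,\dots,k_r;s)$, a uniformly chosen one of the $d(b;k_1,\dots,k_r;s)$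 possible $(b;k_1,\dots,k_r;s)$-collisions of the active blocks is performed, the merged blocks being active; - with probability $q(b:1)$, a uniformly chosen active block is frozen. The $\mathrm{FM}_n$-chain started from $\Sigma^*_n$ a.s. ends in an all-frozen state, whose induced (unlabeled) partition is $E_n$. *)

theory Defs
  imports Complex_Main "HOL-Library.Multiset" "HOL-Library.Disjoint_Sets"
begin

text \<open>Indices of a coefficient family q(b:.): Freeze stands for q(b:1),
  Coll K stands for q(b:k_1,...,k_r;s) with K the multiset {k_1,...,k_r}
  and s = b - sum K.\<close>
datatype cidx = Freeze | Coll "nat multiset"

definition valid_idx :: "nat \<Rightarrow> cidx set" where
  "valid_idx b = (if b = 0 then {} else
     insert Freeze (Coll ` {K. K \<noteq> {#} \<and> (\<forall>k\<in>#K. 2 \<le> k) \<and> sum_mset K \<le> b}))"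

definition coeff_family :: "nat \<Rightarrow> (cidx \<Rightarrow> real) \<Rightarrow> bool" where
  "coeff_family b f \<longleftrightarrow>
     (\<forall>i. i \<notin> valid_idx b \<longrightarrow> f i = 0) \<and>
     (\<forall>i\<in>valid_idx b. 0 \<le> f i) \<and>
     (\<Sum>i\<in>valid_idx b. f i) = 1"

text \<open>First backward recursion at level b for the index (K; b - sum K).
  The sum over i = 1..r is the sum over the elements of K with multiplicity.\<close>
definition BR1 :: "(nat \<Rightarrow> cidx \<Rightarrow> real) \<Rightarrow> nat \<Rightarrow> nat multiset \<Rightarrow> bool" where
  "BR1 q b K \<longleftrightarrow>
    (let s = b - sum_mset K;
         c = (q (b+1) Freeze + 2 * q (b+1) (Coll {#2#})) / real (b+1)
     in q b (Coll K) =
          sum_mset (image_mset (\<lambda>k. real (k+1) * real (count K (k+1) + 1)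
                 / (real (b+1) * real (count K k))
                 * q (b+1) (Coll (add_mset (k+1) (K - {#k#})))) K)
        + (if s = 0 then 0
           else 2 * real (count K 2 + 1) / real (b+1) * q (b+1) (Coll (add_mset 2 K)))
        + real (s+1) / real (b+1) * q (b+1) (Coll K)
        + c * q b (Coll K))"

definition BR2 :: "(nat \<Rightarrow> cidx \<Rightarrow> real) \<Rightarrow> nat \<Rightarrow> bool" where
  "BR2 q b \<longleftrightarrow>
    q b Freeze = real b / real (b+1) * q (b+1) Freeze
      + (q (b+1) Freeze + 2 * q (b+1) (Coll {#2#})) / real (b+1) * q b Freeze"

text \<open>The set Q of arrays (q(b:.))_{b\<ge>1}; the unused level 0 is normalised to 0.\<close>
definition in_Q :: "(nat \<Rightarrow> cidx \<Rightarrow> real) \<Rightarrow> bool" where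
  "in_Q q \<longleftrightarrow>
     q 0 = (\<lambda>_. 0) \<and>
     (\<forall>b\<ge>1. coeff_family b (q b)) \<and>
     (\<forall>b\<ge>2. \<forall>K. Coll K \<in> valid_idx b \<longrightarrow> BR1 q b K) \<and>
     (\<forall>b\<ge>1. BR2 q b) \<and>
     q 2 Freeze > 0"

definition collisions :: "nat set set \<Rightarrow> nat multiset \<Rightarrow> nat set set set set" where
  "collisions A K = {G. G \<subseteq> Pow A \<and> (\<forall>g\<in>G. 2 \<le> card g) \<and> disjoint G \<and>
                        image_mset card (mset_set G) = K}"

definition collide :: "nat set set \<Rightarrow> nat set set set \<Rightarrow> nat set set" where
  "collide A G = (A - \<Union>G) \<union> (Union ` G)"

text \<open>fm_final n q A F P: probability that the FM chain started from the partially
  frozen partition with active blocks A and frozen blocks F is, after n steps,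
  in the all-frozen state with induced partition P.  Every non-trivial step
  decreases the number of active blocks, so n = card A steps reach absorption.\<close>
fun fm_final :: "nat \<Rightarrow> (nat \<Rightarrow> cidx \<Rightarrow> real) \<Rightarrow> nat set set \<Rightarrow> nat set set
                   \<Rightarrow> nat set set \<Rightarrow> real" where
  "fm_final 0 q A F P = (if A = {} \<and> F = P then 1 else 0)"
| "fm_final (Suc n) q A F P =
     (if A = {} then (if F = P then 1 else 0) else
      (let b = card A in
        (\<Sum>K\<in>{K. Coll K \<in> valid_idx b}.
            q b (Coll K) * (\<Sum>G\<in>collisions A K. fm_final n q (collide A G) F P)
              / real (card (collisions A K)))
      + q b Freeze * (\<Sum>B\<in>A. fm_final n q (A - {B}) (insert B F) P) / real b))"

definition prob_E :: "(nat \<Rightarrow> cidx \<Rightarrow> real) \<Rightarrow> nat \<Rightarrow> nat set set \<Rightarrow> real" where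
  "prob_E q n P = fm_final n q ((\<lambda>i. {i}) ` {1..n}) {} P"

definition comp_blocks :: "nat list \<Rightarrow> nat set set" where
  "comp_blocks c = set (map (\<lambda>j. {sum_list (take j c) + 1 .. sum_list (take (Suc j) c)})
                           [0..<length c])"

text \<open>EPPF of the final partition (E_n): p(c_1,...,c_l) = P(E_m = {A_1,...,A_l})
  with |A_j| = c_j (by exchangeability any such partition may be used).\<close>
definition eppf :: "(nat \<Rightarrow> cidx \<Rightarrow> real) \<Rightarrow> nat list \<Rightarrow> real" where
  "eppf q c = prob_E q (sum_list c) (comp_blocks c)"

definition compositions :: "nat list set" where
  "compositions = {c. \<forall>x\<in>set c. 0 < x}"

end

theory Submission
  imports Defs
begin


definition KS :: "nat \<Rightarrow> nat multiset set" where
  "KS b = {K. K \<noteq> {#} \<and> (\<forall>k\<in>#K. 2 \<le> k) \<and> sum_mset K \<le> b}"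

lemma KS_eq: "b \<noteq> 0 \<Longrightarrow> {K. Coll K \<in> valid_idx b} = KS b"
  by (auto simp: valid_idx_def KS_def)

lemma KS_0: "{K. Coll K \<in> valid_idx 0} = {}"
  by (auto simp: valid_idx_def)

lemma size_le_sum_mset: "(\<forall>k\<in>#K. 1 \<le> k) \<Longrightarrow> size K \<le> sum_mset (K::nat multiset)"
  by (induction K) auto

lemma finite_KS: "finite (KS b)"
proof -
  have "KS b \<subseteq> (\<Union>m\<in>{0..b}. multisets_of_size {0..b} m)"
  proof
    fix K assume K: "K \<in> KS b"
    hence s: "sum_mset K \<le> b" and e: "\<forall>k\<in>#K. 2 \<le> k" by (auto simp: KS_def)
    have "size K \<le> sum_mset K" using e by (intro size_le_sum_mset) auto
    moreover have "set_mset K \<subseteq> {0..b}"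
    proof
      fix k assume "k \<in> set_mset K"
      hence "k \<le> sum_mset K" using sum_mset.remove by fastforce
      thus "k \<in> {0..b}" using s by auto
    qed
    ultimately show "K \<in> (\<Union>m\<in>{0..b}. multisets_of_size {0..b} m)"
      using s by (auto simp: multisets_of_size_def)
  qed
  thus ?thesis by (rule finite_subset) auto
qed

lemma finite_valid: "finite (valid_idx b)"
  using finite_KS[of b] by (auto simp: valid_idx_def KS_def)

lemma collisions_finite_G: "finite A \<Longrightarrow> G \<in> collisions A K \<Longrightarrow> finite G"
  unfolding collisions_def by (auto intro: finite_subset[of _ "Pow A"])

lemma finite_collisions: "finite A \<Longrightarrow> finite (collisions A K)"
  unfolding collisions_def by (rule finite_subset[of _ "Pow (Pow A)"]) auto

lemma finite_collide: "finite A \<Longrightarrow> G \<in> collisions A K \<Longrightarrow> finite (collide A G)"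
  unfolding collide_def using collisions_finite_G by auto

lemma card_collide:
  assumes A: "finite A" and G: "G \<in> collisions A K"
  shows "card (collide A G) + sum_mset K \<le> card A + size K"
proof -
  have fG: "finite G" using collisions_finite_G[OF A G] .
  have GA: "G \<subseteq> Pow A" and dj: "disjoint G" and K: "image_mset card (mset_set G) = K"
    using G by (auto simp: collisions_def)
  have UA: "\<Union>G \<subseteq> A" using GA by auto
  have fin: "\<And>g. g \<in> G \<Longrightarrow> finite g" using GA A by (auto intro: finite_subset)
  have cU: "card (\<Union>G) = sum card G" using card_Union_disjoint[OF dj fin] by simp
  also have "\<dots> = sum_mset K" using K by (simp add: sum_unfold_sum_mset)
  finally have cU: "card (\<Union>G) = sum_mset K" .
  have sK: "size K = card G" using K[symmetric] fG by simp
  have "card (collide A G) \<le> card (A - \<Union>G) + card (Union ` G)"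
    unfolding collide_def by (rule card_Un_le)
  also have "card (Union ` G) \<le> card G" using fG by (rule card_image_le)
  moreover have "card (A - \<Union>G) = card A - card (\<Union>G)" using UA A by (simp add: card_Diff_subset finite_subset)
  moreover have "card (\<Union>G) \<le> card A" using UA A by (simp add: card_mono)
  ultimately show ?thesis using cU sK by linarith
qed

lemma collisions_size:
  assumes A: "finite A" and G: "G \<in> collisions A K"
  shows "size K \<le> sum_mset K"
proof -
  have fG: "finite G" using collisions_finite_G[OF A G] .
  have K: "image_mset card (mset_set G) = K" and c: "\<forall>g\<in>G. 2 \<le> card g" using G by (auto simp: collisions_def)
  have "\<forall>k\<in>#K. 1 \<le> k" using K c fG by (auto, metis Suc_leD numeral_2_eq_2)
  thus ?thesis by (rule size_le_sum_mset)
qed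

lemma KS_mu: "K \<in> KS b \<Longrightarrow> size K < sum_mset K"
proof -
  assume "K \<in> KS b"
  hence ne: "K \<noteq> {#}" and e: "\<forall>k\<in>#K. 2 \<le> k" by (auto simp: KS_def)
  have "\<forall>k\<in>#K. 2 \<le> k \<Longrightarrow> K \<noteq> {#} \<Longrightarrow> size K < sum_mset K"
  proof (induction K)
    case empty thus ?case by simp
  next
    case (add x K)
    show ?case
    proof (cases "K = {#}")
      case True thus ?thesis using add by auto
    next
      case False thus ?thesis using add by fastforce
    qed
  qed
  thus ?thesis using ne e by blast
qed

lemma fm_Suc: "A \<noteq> {} \<Longrightarrow> fm_final (Suc n) q A F P =
   (\<Sum>K\<in>{K. Coll K \<in> valid_idx (card A)}.
            q (card A) (Coll K) * (\<Sum>G\<in>collisions A K. fm_final n q (collide A G) F P)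
              / real (card (collisions A K)))
      + q (card A) Freeze * (\<Sum>B\<in>A. fm_final n q (A - {B}) (insert B F) P) / real (card A)"
  by (simp add: Let_def)

lemma fm_nonneg: "(\<And>b i. 0 \<le> q b i) \<Longrightarrow> 0 \<le> fm_final k q A F P"
proof (induction k arbitrary: A F)
  case 0 thus ?case by simp
next
  case (Suc k)
  show ?case
  proof (cases "A = {}")
    case True thus ?thesis by simp
  next
    case False
    show ?thesis unfolding fm_Suc[OF False]
      by (intro add_nonneg_nonneg sum_nonneg divide_nonneg_nonneg mult_nonneg_nonneg Suc) auto
  qed
qed

lemma fm_local:
  assumes "\<And>b. b < N \<Longrightarrow> q1 b = q2 b"
  shows "finite A \<Longrightarrow> card A < N \<Longrightarrow> fm_final k q1 A F P = fm_final k q2 A F P"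
proof (induction k arbitrary: A F)
  case 0 thus ?case by simp
next
  case (Suc k)
  show ?case
  proof (cases "A = {}")
    case True thus ?thesis by simp
  next
    case False
    have q: "q1 (card A) = q2 (card A)" using assms Suc.prems by auto
    have c: "\<And>K G. G \<in> collisions A K \<Longrightarrow> fm_final k q1 (collide A G) F P = fm_final k q2 (collide A G) F P"
    proof -
      fix K G assume G: "G \<in> collisions A K"
      show "fm_final k q1 (collide A G) F P = fm_final k q2 (collide A G) F P"
        using Suc.IH[of "collide A G"] finite_collide[OF Suc.prems(1) G] card_collide[OF Suc.prems(1) G] Suc.prems(2)
          collisions_size[OF Suc.prems(1) G] by simp
    qed
    have f: "\<And>B. fm_final k q1 (A - {B}) (insert B F) P = fm_final k q2 (A - {B}) (insert B F) P"
      using Suc.IH Suc.prems by (meson card_Diff1_le finite_Diff le_less_trans)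
    show ?thesis unfolding fm_Suc[OF False] q using c f by (simp cong: sum.cong)
  qed
qed

lemma fm_card:
  "finite A \<Longrightarrow> fm_final k q A F P \<noteq> 0 \<Longrightarrow> card P \<le> card A + card F"
proof (induction k arbitrary: A F)
  case 0 thus ?case by (simp split: if_splits)
next
  case (Suc k)
  show ?case
  proof (cases "A = {}")
    case True thus ?thesis using Suc.prems by (simp split: if_splits)
  next
    case False
    from Suc.prems(2)[unfolded fm_Suc[OF False]]
    consider (c) K G where "G \<in> collisions A K" "fm_final k q (collide A G) F P \<noteq> 0"
      | (f) B where "B \<in> A" "fm_final k q (A - {B}) (insert B F) P \<noteq> 0"
      by (metis (no_types, lifting) add.right_neutral divide_eq_0_iff mult_zero_right sum.neutral)
    thus ?thesis
    proof cases
      case c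
      have "card P \<le> card (collide A G) + card F"
        using Suc.IH[OF finite_collide[OF Suc.prems(1) c(1)] c(2)] .
      thus ?thesis using card_collide[OF Suc.prems(1) c(1)] collisions_size[OF Suc.prems(1) c(1)] by linarith
    next
      case f
      have "card P \<le> card (A - {B}) + card (insert B F)"
        using Suc.IH[of "A - {B}"] f Suc.prems(1) by auto
      moreover have "card (A - {B}) = card A - 1" using f Suc.prems(1) by simp
      moreover have "card (insert B F) \<le> card F + 1"
        by (cases "finite F") (auto simp: card_insert_if)
      moreover have "card A \<ge> 1" using f Suc.prems(1) by (metis One_nat_def Suc_leI card_gt_0_iff empty_iff)
      ultimately show ?thesis by linarith
    qed
  qed
qed

lemma fm_coarse:
  "fm_final k q A F P \<noteq> 0 \<Longrightarrow> X \<in> A \<union> F \<Longrightarrow> \<exists>Y\<in>P. X \<subseteq> Y"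
proof (induction k arbitrary: A F X)
  case 0 thus ?case by (auto split: if_splits)
next
  case (Suc k)
  show ?case
  proof (cases "A = {}")
    case True thus ?thesis using Suc.prems by (auto split: if_splits)
  next
    case False
    from Suc.prems(1)[unfolded fm_Suc[OF False]]
    consider (c) K G where "G \<in> collisions A K" "fm_final k q (collide A G) F P \<noteq> 0"
      | (f) B where "B \<in> A" "fm_final k q (A - {B}) (insert B F) P \<noteq> 0"
      by (metis (no_types, lifting) add.right_neutral divide_eq_0_iff mult_zero_right sum.neutral)
    thus ?thesis
    proof cases
      case c
      show ?thesis
      proof (cases "X \<in> \<Union>G")
        case True
        then obtain g where g: "g \<in> G" "X \<in> g" by auto
        have "\<Union>g \<in> collide A G" using g unfolding collide_def by auto
        then obtain Y where "Y \<in> P" "\<Union>g \<subseteq> Y" using Suc.IH[OF c(2)] by blast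
        thus ?thesis using g by blast
      next
        case False
        hence "X \<in> collide A G \<union> F" using Suc.prems(2) unfolding collide_def by auto
        thus ?thesis using Suc.IH[OF c(2)] by blast
      qed
    next
      case f
      have "X \<in> (A - {B}) \<union> insert B F" using Suc.prems(2) f by auto
      thus ?thesis using Suc.IH[OF f(2)] by blast
    qed
  qed
qed

lemma fm_freeze_pos:
  assumes nn: "\<And>b i. 0 \<le> q b i" and pos: "\<And>b. 1 \<le> b \<Longrightarrow> 0 < q b Freeze"
  shows "finite A \<Longrightarrow> card A \<le> k \<Longrightarrow> 0 < fm_final k q A F (A \<union> F)"
proof (induction k arbitrary: A F)
  case 0 thus ?case by simp
next
  case (Suc k)
  show ?case
  proof (cases "A = {}")
    case True thus ?thesis by simp
  next
    case False
    then obtain B where B: "B \<in> A" by auto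
    have e: "(A - {B}) \<union> insert B F = A \<union> F" using B by auto
    have t: "0 < fm_final k q (A - {B}) (insert B F) (A \<union> F)"
      using Suc.IH[of "A - {B}" "insert B F"] Suc.prems B e by (simp add: card_Diff1_le)
    have "fm_final k q (A - {B}) (insert B F) (A \<union> F) \<le> (\<Sum>B\<in>A. fm_final k q (A - {B}) (insert B F) (A \<union> F))"
      by (rule member_le_sum[OF B]) (auto intro: fm_nonneg nn Suc.prems)
    hence s: "0 < (\<Sum>B\<in>A. fm_final k q (A - {B}) (insert B F) (A \<union> F))" using t by linarith
    have cA: "0 < card A" using Suc.prems False by auto
    have "0 < q (card A) Freeze * (\<Sum>B\<in>A. fm_final k q (A - {B}) (insert B F) (A \<union> F)) / real (card A)"
      using pos[of "card A"] cA s by auto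
    moreover have "0 \<le> (\<Sum>K\<in>{K. Coll K \<in> valid_idx (card A)}.
            q (card A) (Coll K) * (\<Sum>G\<in>collisions A K. fm_final k q (collide A G) F (A \<union> F))
              / real (card (collisions A K)))"
      by (intro sum_nonneg divide_nonneg_nonneg mult_nonneg_nonneg nn fm_nonneg) auto
    ultimately show ?thesis unfolding fm_Suc[OF False] by linarith
  qed
qed



definition An :: "nat \<Rightarrow> nat set set" where "An n = (\<lambda>i. {i}) ` {1..n}"

definition is_part :: "nat \<Rightarrow> nat set set \<Rightarrow> bool" where
  "is_part n P \<longleftrightarrow> finite P \<and> (\<forall>Y\<in>P. Y \<noteq> {}) \<and> disjoint P \<and> \<Union>P = {1..n}"

lemma comp_blocks_Cons:
  "comp_blocks (x # c) = insert {1..x} ((\<lambda>Y. (+) x ` Y) ` comp_blocks c)"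
proof -
  have u: "[0..<length (x # c)] = 0 # map Suc [0..<length c]"
    by (simp add: map_Suc_upt upt_conv_Cons del: upt_Suc)
  show ?thesis unfolding comp_blocks_def u
    by (simp add: image_image add.commute)
qed

lemma comp_blocks_Nil: "comp_blocks [] = {}"
  by (simp add: comp_blocks_def)

lemma comp_blocks_props:
  "\<forall>x\<in>set c. 0 < x \<Longrightarrow> is_part (sum_list c) (comp_blocks c) \<and>
     image_mset card (mset_set (comp_blocks c)) = mset c"
proof (induction c)
  case Nil thus ?case by (simp add: comp_blocks_Nil is_part_def)
next
  case (Cons x c)
  let ?P = "comp_blocks c"
  let ?sh = "\<lambda>Y. (+) x ` Y"
  have x: "0 < x" and IH: "is_part (sum_list c) ?P" "image_mset card (mset_set ?P) = mset c"
    using Cons by auto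
  have fP: "finite ?P" using IH by (simp add: is_part_def)
  have injsh: "inj_on ?sh ?P" by (intro inj_onI) (simp add: inj_image_eq_iff)
  have shsub: "\<And>Y. Y \<in> ?P \<Longrightarrow> ?sh Y \<subseteq> {x+1..x + sum_list c}"
    proof -
    fix Y assume Y: "Y \<in> ?P"
    have "Y \<subseteq> {1..sum_list c}" using IH(1) Y unfolding is_part_def by blast
    hence "?sh Y \<subseteq> (+) x ` {1..sum_list c}" by (rule image_mono)
    thus "?sh Y \<subseteq> {x+1..x + sum_list c}" by (simp add: add.commute)
  qed
  have notin: "{1..x} \<notin> ?sh ` ?P"
  proof
    assume "{1..x} \<in> ?sh ` ?P"
    then obtain Y where "Y \<in> ?P" "{1..x} = ?sh Y" by auto
    moreover have "1 \<in> {1..x}" using x by simp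
    ultimately show False using shsub[of Y] by auto
  qed
  have part: "is_part (sum_list (x # c)) (comp_blocks (x # c))"
    unfolding comp_blocks_Cons is_part_def
  proof (intro conjI)
    show "finite (insert {1..x} (?sh ` ?P))" using fP by simp
    show "\<forall>Y\<in>insert {1..x} (?sh ` ?P). Y \<noteq> {}" using IH x by (auto simp: is_part_def)
    show "disjoint (insert {1..x} (?sh ` ?P))"
      unfolding disjoint_def
    proof (intro ballI impI)
      fix a b assume a: "a \<in> insert {1..x} (?sh ` ?P)" and b: "b \<in> insert {1..x} (?sh ` ?P)" and ab: "a \<noteq> b"
      have d1: "\<And>Y. Y \<in> ?P \<Longrightarrow> {1..x} \<inter> ?sh Y = {}" proof -
        fix Y assume Y: "Y \<in> ?P"
        show "{1..x} \<inter> ?sh Y = {}"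
        proof (rule ccontr)
          assume "{1..x} \<inter> ?sh Y \<noteq> {}"
          then obtain z where "z \<in> {1..x}" "z \<in> ?sh Y" by blast
          thus False using shsub[OF Y] by (auto simp del: image_add_atLeastAtMost)
        qed
      qed
      have d2: "\<And>Y Z. Y \<in> ?P \<Longrightarrow> Z \<in> ?P \<Longrightarrow> ?sh Y \<noteq> ?sh Z \<Longrightarrow> ?sh Y \<inter> ?sh Z = {}"
      proof -
        fix Y Z assume "Y \<in> ?P" "Z \<in> ?P" "?sh Y \<noteq> ?sh Z"
        hence "Y \<noteq> Z" by auto
        hence "Y \<inter> Z = {}" using IH(1) \<open>Y \<in> ?P\<close> \<open>Z \<in> ?P\<close> unfolding is_part_def disjoint_def by blast
        thus "?sh Y \<inter> ?sh Z = {}" by auto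
      qed
      show "a \<inter> b = {}" proof (cases "a = {1..x}")
        case True
        hence "b \<in> ?sh ` ?P" using b ab by auto
        thus ?thesis using True d1 by auto
      next
        case False
        hence a': "a \<in> ?sh ` ?P" using a by auto
        show ?thesis
        proof (cases "b = {1..x}")
          case True thus ?thesis using a' d1 by auto
        next
          case False
          hence "b \<in> ?sh ` ?P" using b by auto
          thus ?thesis using a' ab d2 by auto
        qed
      qed
    qed
    show "\<Union> (insert {1..x} (?sh ` ?P)) = {1..sum_list (x # c)}"
    proof -
      have "\<Union> (?sh ` ?P) = ?sh (\<Union>?P)" by auto
      also have "\<dots> = {x+1..x + sum_list c}" using IH(1) by (simp add: is_part_def add.commute)
      moreover have "{1..x} \<union> {x+1..x + sum_list c} = {1..x + sum_list c}" by auto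
      ultimately show ?thesis by simp
    qed
  qed
  have "image_mset card (mset_set (comp_blocks (x # c))) =
        add_mset (card {1..x}) (image_mset card (mset_set (?sh ` ?P)))"
    unfolding comp_blocks_Cons using fP notin by simp
  also have "mset_set (?sh ` ?P) = image_mset ?sh (mset_set ?P)"
    using image_mset_mset_set[OF injsh] by simp
  also have "image_mset card (image_mset ?sh (mset_set ?P)) = image_mset card (mset_set ?P)"
    unfolding multiset.map_comp
  proof (rule image_mset_cong)
    fix Y assume "Y \<in># mset_set ?P"
    show "(card \<circ> ?sh) Y = card Y" by (simp add: card_image)
  qed
  finally show ?case using part IH(2) by simp
qed



lemma An_finite: "finite (An n)" by (simp add: An_def)
lemma An_card: "card (An n) = n" by (simp add: An_def card_image inj_on_def)
lemma An_Union: "\<Union>(An n) = {1..n}" by (auto simp: An_def)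

lemma sub_sing: "g \<subseteq> An n \<Longrightarrow> g = (\<lambda>i. {i}) ` \<Union>g"
proof
  assume g: "g \<subseteq> An n"
  show "g \<subseteq> (\<lambda>i. {i}) ` \<Union>g"
  proof
    fix x assume x: "x \<in> g"
    then obtain i where "x = {i}" using g by (auto simp: An_def)
    thus "x \<in> (\<lambda>i. {i}) ` \<Union>g" using x by blast
  qed
  show "(\<lambda>i. {i}) ` \<Union>g \<subseteq> g"
  proof
    fix y assume "y \<in> (\<lambda>i. {i}) ` \<Union>g"
    then obtain i x where "y = {i}" "x \<in> g" "i \<in> x" by blast
    moreover then obtain j where "x = {j}" using g by (auto simp: An_def)
    ultimately show "y \<in> g" by simp
  qed
qed

lemma card_sub_sing: "g \<subseteq> An n \<Longrightarrow> card (\<Union>g) = card g"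
proof -
  assume g: "g \<subseteq> An n"
  have "card g = card ((\<lambda>i. {i}) ` \<Union>g)" using sub_sing[OF g] by simp
  also have "\<dots> = card (\<Union>g)" by (simp add: card_image inj_on_def)
  finally show ?thesis by simp
qed

lemma collide_An:
  assumes G: "G \<in> collisions (An n) K"
  shows "finite (collide (An n) G)" "\<forall>Y\<in>collide (An n) G. Y \<noteq> {}"
    "\<Union>(collide (An n) G) = {1..n}"
    "image_mset card (mset_set {Y\<in>collide (An n) G. 2 \<le> card Y}) = K"
proof -
  have GA: "G \<subseteq> Pow (An n)" and c2: "\<forall>g\<in>G. 2 \<le> card g" and dj: "disjoint G"
    and K: "image_mset card (mset_set G) = K" using G by (auto simp: collisions_def)
  have fG: "finite G" using collisions_finite_G[OF An_finite G] .
  show "finite (collide (An n) G)" using finite_collide[OF An_finite G] .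
  have cU: "\<And>g. g \<in> G \<Longrightarrow> card (\<Union>g) = card g" using GA card_sub_sing by blast
  show "\<forall>Y\<in>collide (An n) G. Y \<noteq> {}"
  proof
    fix Y assume "Y \<in> collide (An n) G"
    then consider "Y \<in> An n" | g where "g \<in> G" "Y = \<Union>g" unfolding collide_def by auto
    thus "Y \<noteq> {}"
    proof cases
      case 1 thus ?thesis by (auto simp: An_def)
    next
      case 2 thus ?thesis using cU[of g] c2 by fastforce
    qed
  qed
  show "\<Union>(collide (An n) G) = {1..n}"
  proof -
    have "\<Union>G \<subseteq> An n" using GA by auto
    hence "\<Union>(collide (An n) G) = \<Union>(An n)" unfolding collide_def by auto
    thus ?thesis by (simp add: An_Union)
  qed
  have eq: "{Y\<in>collide (An n) G. 2 \<le> card Y} = Union ` G"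
  proof
    show "{Y\<in>collide (An n) G. 2 \<le> card Y} \<subseteq> Union ` G"
    proof
      fix Y assume Y: "Y \<in> {Y\<in>collide (An n) G. 2 \<le> card Y}"
      show "Y \<in> Union ` G"
      proof (cases "Y \<in> An n")
        case True
        hence "card Y = 1" by (auto simp: An_def)
        thus ?thesis using Y by simp
      next
        case False thus ?thesis using Y unfolding collide_def by auto
      qed
    qed
    show "Union ` G \<subseteq> {Y\<in>collide (An n) G. 2 \<le> card Y}"
      using cU c2 unfolding collide_def by auto
  qed
  have inj: "inj_on Union G"
  proof (rule inj_onI)
    fix g h assume "g \<in> G" "h \<in> G" "\<Union>g = \<Union>h"
    thus "g = h" using sub_sing[of g n] sub_sing[of h n] GA by (metis PowD subsetD)
  qed
  have "image_mset card (mset_set (Union ` G)) = image_mset card (image_mset Union (mset_set G))"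
    using image_mset_mset_set[OF inj] by simp
  also have "\<dots> = image_mset card (mset_set G)"
    unfolding multiset.map_comp
    by (rule image_mset_cong) (use cU fG in auto)
  finally show "image_mset card (mset_set {Y\<in>collide (An n) G. 2 \<le> card Y}) = K"
    using eq K by simp
qed

lemma part_eq:
  assumes fS: "finite S" and neS: "\<forall>X\<in>S. X \<noteq> {}" and US: "\<Union>S = U"
    and P: "finite P" "\<forall>Y\<in>P. Y \<noteq> {}" "disjoint P" "\<Union>P = U"
    and co: "\<forall>X\<in>S. \<exists>Y\<in>P. X \<subseteq> Y" and cd: "card S \<le> card P"
  shows "S = P"
proof -
  define f where "f X = (SOME Y. Y \<in> P \<and> X \<subseteq> Y)" for X
  have fP: "\<And>X. X \<in> S \<Longrightarrow> f X \<in> P \<and> X \<subseteq> f X"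
    unfolding f_def using co by (metis (no_types, lifting) someI_ex)
  have uq: "\<And>Y Z z. Y \<in> P \<Longrightarrow> Z \<in> P \<Longrightarrow> z \<in> Y \<Longrightarrow> z \<in> Z \<Longrightarrow> Y = Z"
    using P(3) unfolding disjoint_def by blast
  have sur: "P \<subseteq> f ` S"
  proof
    fix Y assume Y: "Y \<in> P"
    then obtain y where y: "y \<in> Y" using P(2) by blast
    hence "y \<in> U" using Y P(4) by blast
    then obtain X where X: "X \<in> S" "y \<in> X" using US by blast
    have "f X = Y" using fP[OF X(1)] X(2) y Y uq by blast
    thus "Y \<in> f ` S" using X(1) by blast
  qed
  have im: "f ` S = P" using sur fP by blast
  have "card S \<le> card (f ` S)" using im cd by simp
  hence "card (f ` S) = card S" using card_image_le[OF fS, of f] by linarith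
  hence inj: "inj_on f S" using eq_card_imp_inj_on[OF fS] by blast
  have fid: "\<And>X. X \<in> S \<Longrightarrow> f X = X"
  proof
    fix X assume X: "X \<in> S"
    show "X \<subseteq> f X" using fP[OF X] by blast
    show "f X \<subseteq> X"
    proof
      fix z assume z: "z \<in> f X"
      hence "z \<in> U" using fP[OF X] P(4) by blast
      then obtain X' where X': "X' \<in> S" "z \<in> X'" using US by blast
      have "f X' = f X" using fP[OF X'(1)] fP[OF X] X'(2) z uq by blast
      hence "X' = X" using inj X X'(1) by (meson inj_onD)
      thus "z \<in> X" using X'(2) by simp
    qed
  qed
  have "f ` S = S" using fid by simp
  thus ?thesis using im by simp
qed

lemma part_collision:
  assumes P: "is_part n P"
  defines "G \<equiv> (\<lambda>Y. (\<lambda>i. {i}) ` Y) ` {Y\<in>P. 2 \<le> card Y}"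
  shows "G \<in> collisions (An n) (image_mset card (mset_set {Y\<in>P. 2 \<le> card Y}))"
    "collide (An n) G = P"
proof -
  let ?s = "\<lambda>Y. (\<lambda>i::nat. {i}) ` Y"
  let ?P2 = "{Y\<in>P. 2 \<le> card Y}"
  have fP: "finite P" and ne: "\<forall>Y\<in>P. Y \<noteq> {}" and dj: "disjoint P" and UP: "\<Union>P = {1..n}"
    using P by (auto simp: is_part_def)
  have sub: "\<And>Y. Y \<in> P \<Longrightarrow> Y \<subseteq> {1..n}" using UP by blast
  have cs: "\<And>Y. card (?s Y) = card Y" by (simp add: card_image inj_on_def)
  have injs: "inj_on ?s ?P2" by (intro inj_onI) (auto simp: inj_image_eq_iff inj_on_def)
  have uq: "\<And>Y Z z. Y \<in> P \<Longrightarrow> Z \<in> P \<Longrightarrow> z \<in> Y \<Longrightarrow> z \<in> Z \<Longrightarrow> Y = Z"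
    using dj unfolding disjoint_def by blast
  show "G \<in> collisions (An n) (image_mset card (mset_set ?P2))"
    unfolding collisions_def
  proof (intro CollectI conjI)
    show "G \<subseteq> Pow (An n)" unfolding G_def An_def using sub by blast
    show "\<forall>g\<in>G. 2 \<le> card g" unfolding G_def using cs by auto
    show "disjoint G" unfolding disjoint_def G_def
    proof (intro ballI impI)
      fix a b assume a: "a \<in> ?s ` ?P2" and b: "b \<in> ?s ` ?P2" and ab: "a \<noteq> b"
      then obtain Y Z where "Y \<in> P" "Z \<in> P" "a = ?s Y" "b = ?s Z" by auto
      moreover hence "Y \<noteq> Z" using ab by auto
      ultimately show "a \<inter> b = {}" using uq by blast
    qed
    have "mset_set G = image_mset ?s (mset_set ?P2)"
      unfolding G_def using image_mset_mset_set[OF injs] by simp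
    thus "image_mset card (mset_set G) = image_mset card (mset_set ?P2)"
      using cs by (simp add: multiset.map_comp o_def)
  qed
  show "collide (An n) G = P"
  proof -
    have UG: "Union ` G = ?P2" unfolding G_def by (auto simp: image_image)
    have r: "An n - \<Union>G = {Y\<in>P. \<not> 2 \<le> card Y}"
    proof
      show "An n - \<Union>G \<subseteq> {Y\<in>P. \<not> 2 \<le> card Y}"
      proof
        fix X assume X: "X \<in> An n - \<Union>G"
        then obtain i where i: "X = {i}" "i \<in> {1..n}" by (auto simp: An_def)
        then obtain Y where Y: "Y \<in> P" "i \<in> Y" using UP by blast
        have "\<not> 2 \<le> card Y"
        proof
          assume "2 \<le> card Y"
          hence "X \<in> \<Union>G" unfolding G_def using Y i by blast
          thus False using X by blast
        qed
        moreover have "Y = {i}"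
        proof -
          have "finite Y" using sub[OF Y(1)] finite_subset by blast
          hence "card Y = 1" using \<open>\<not> 2 \<le> card Y\<close> Y(2) by (metis card_0_eq empty_iff le_less_linear less_2_cases One_nat_def)
          thus ?thesis using Y(2) by (metis card_1_singletonE singletonD)
        qed
        ultimately show "X \<in> {Y\<in>P. \<not> 2 \<le> card Y}" using Y i by simp
      qed
      show "{Y\<in>P. \<not> 2 \<le> card Y} \<subseteq> An n - \<Union>G"
      proof
        fix Y assume Y: "Y \<in> {Y\<in>P. \<not> 2 \<le> card Y}"
        have "finite Y" using sub Y finite_subset by blast
        moreover have "Y \<noteq> {}" using ne Y by blast
        ultimately have "card Y = 1" using Y by (metis card_0_eq le_less_linear less_2_cases One_nat_def mem_Collect_eq)
        then obtain i where i: "Y = {i}" by (metis card_1_singletonE)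
        have iin: "i \<in> {1..n}" using sub Y i by blast
        have "{i} \<notin> \<Union>G"
        proof
          assume "{i} \<in> \<Union>G"
          then obtain Z where "Z \<in> ?P2" "i \<in> Z" unfolding G_def by auto
          hence "Z = Y" using uq Y i by blast
          thus False using \<open>Z \<in> ?P2\<close> Y by simp
        qed
        thus "Y \<in> An n - \<Union>G" using i iin by (auto simp: An_def)
      qed
    qed
    show ?thesis unfolding collide_def r UG by auto
  qed
qed



lemma Q_nonneg: "in_Q q \<Longrightarrow> 0 \<le> q b i"
proof -
  assume Q: "in_Q q"
  show ?thesis
  proof (cases "b = 0")
    case True thus ?thesis using Q by (simp add: in_Q_def)
  next
    case False
    hence "coeff_family b (q b)" using Q by (simp add: in_Q_def)
    thus ?thesis by (cases "i \<in> valid_idx b") (auto simp: coeff_family_def)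
  qed
qed

lemma Q_le1: "in_Q q \<Longrightarrow> 1 \<le> b \<Longrightarrow> i \<in> valid_idx b \<Longrightarrow> q b i \<le> 1"
proof -
  assume Q: "in_Q q" and b: "1 \<le> b" and i: "i \<in> valid_idx b"
  have cf: "coeff_family b (q b)" using Q b by (simp add: in_Q_def)
  have "q b i \<le> (\<Sum>j\<in>valid_idx b. q b j)"
    by (rule member_le_sum[OF i]) (use Q_nonneg[OF Q] finite_valid in auto)
  thus ?thesis using cf by (simp add: coeff_family_def)
qed

lemma valid1: "valid_idx 1 = {Freeze}"
proof -
  have "\<And>K::nat multiset. K \<noteq> {#} \<Longrightarrow> \<forall>k\<in>#K. 2 \<le> k \<Longrightarrow> \<not> sum_mset K \<le> 1"
  proof -
    fix K :: "nat multiset" assume "K \<noteq> {#}" "\<forall>k\<in>#K. 2 \<le> k"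
    then obtain k where k: "k \<in># K" "2 \<le> k" by (metis multiset_nonemptyE)
    have "k \<le> sum_mset K" using k(1) sum_mset.remove by fastforce
    thus "\<not> sum_mset K \<le> 1" using k by linarith
  qed
  thus ?thesis by (auto simp: valid_idx_def)
qed

lemma Q_pos: "in_Q q \<Longrightarrow> 1 \<le> b \<Longrightarrow> 0 < q b Freeze"
proof -
  assume Q: "in_Q q" and b: "1 \<le> b"
  have nn: "\<And>b i. 0 \<le> q b i" using Q_nonneg[OF Q] .
  have "coeff_family 1 (q 1)" using Q by (simp add: in_Q_def)
  hence one: "q 1 Freeze = 1" unfolding coeff_family_def valid1 by simp
  have stp: "0 < q (Suc m) Freeze" if m: "2 \<le> m" and pm: "0 < q m Freeze" for m
  proof (rule ccontr)
    assume "\<not> 0 < q (Suc m) Freeze"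
    hence z: "q (Suc m) Freeze = 0" using nn[of "Suc m" Freeze] by linarith
    have br: "BR2 q m" using Q m by (simp add: in_Q_def)
    let ?x = "q (Suc m) (Coll {#2#})"
    have "Coll {#2#} \<in> valid_idx (Suc m)" using m by (auto simp: valid_idx_def)
    hence x1: "?x \<le> 1" using Q_le1[OF Q] by simp
    have x0: "0 \<le> ?x" using nn by simp
    have e: "q m Freeze = 2 * ?x / real (Suc m) * q m Freeze"
      using br z by (simp add: BR2_def)
    have "2 * ?x / real (Suc m) < 1" using x1 x0 m by (simp add: field_simps)
    hence "2 * ?x / real (Suc m) * q m Freeze < 1 * q m Freeze" using pm by (intro mult_strict_right_mono) auto
    thus False using e by linarith
  qed
  show ?thesis
  proof (cases "b = 1")
    case True thus ?thesis using one by simp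
  next
    case False
    hence "2 \<le> b" using b by simp
    thus ?thesis
    proof (induction b rule: dec_induct)
      case base thus ?case using Q by (simp add: in_Q_def)
    next
      case (step m) thus ?case using \<open>2 \<le> m\<close> by (intro stp) auto
    qed
  qed
qed



definition TK :: "(nat \<Rightarrow> cidx \<Rightarrow> real) \<Rightarrow> nat \<Rightarrow> nat multiset \<Rightarrow> nat set set \<Rightarrow> real" where
  "TK q n K P = (\<Sum>G\<in>collisions (An n) K. fm_final (n-1) q (collide (An n) G) {} P)
                  / real (card (collisions (An n) K))"

definition TF :: "(nat \<Rightarrow> cidx \<Rightarrow> real) \<Rightarrow> nat \<Rightarrow> nat set set \<Rightarrow> real" where
  "TF q n P = (\<Sum>B\<in>An n. fm_final (n-1) q (An n - {B}) {B} P) / real n"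

lemma prob_decomp:
  assumes n: "1 \<le> n"
  shows "prob_E q n P = (\<Sum>K\<in>KS n. q n (Coll K) * TK q n K P) + q n Freeze * TF q n P"
proof -
  have ne: "An n \<noteq> {}" using n by (auto simp: An_def)
  have nn: "n = Suc (n - 1)" using n by simp
  have 1: "prob_E q n P = fm_final (Suc (n-1)) q (An n) {} P"
    unfolding prob_E_def An_def[symmetric] using arg_cong[OF nn, of "\<lambda>k. fm_final k q (An n) {} P"] by simp
  have ks: "{K. Coll K \<in> valid_idx n} = KS n" using n KS_eq by auto
  have "fm_final (Suc (n-1)) q (An n) {} P = (\<Sum>K\<in>KS n. q n (Coll K) * TK q n K P) + q n Freeze * TF q n P"
    unfolding fm_Suc[OF ne] An_card ks
    by (simp add: TK_def TF_def times_divide_eq_right)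
  thus ?thesis using 1 by simp
qed

lemma TK_local:
  assumes eq: "\<And>b. b < n \<Longrightarrow> q1 b = q2 b" and K: "K \<in> KS n"
  shows "TK q1 n K P = TK q2 n K P"
proof -
  have "\<And>G. G \<in> collisions (An n) K \<Longrightarrow>
     fm_final (n-1) q1 (collide (An n) G) {} P = fm_final (n-1) q2 (collide (An n) G) {} P"
  proof -
    fix G assume G: "G \<in> collisions (An n) K"
    have c: "card (collide (An n) G) < n"
      using card_collide[OF An_finite G] KS_mu[OF K] by (simp add: An_card)
    show "fm_final (n-1) q1 (collide (An n) G) {} P = fm_final (n-1) q2 (collide (An n) G) {} P"
      by (rule fm_local[OF eq finite_collide[OF An_finite G] c])
  qed
  thus ?thesis unfolding TK_def by (simp cong: sum.cong)
qed

lemma TF_local: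
  assumes eq: "\<And>b. b < n \<Longrightarrow> q1 b = q2 b" and n: "1 \<le> n"
  shows "TF q1 n P = TF q2 n P"
proof -
  have "\<And>B. B \<in> An n \<Longrightarrow>
     fm_final (n-1) q1 (An n - {B}) {B} P = fm_final (n-1) q2 (An n - {B}) {B} P"
  proof -
    fix B assume B: "B \<in> An n"
    have "card (An n - {B}) = card (An n) - 1" by (rule card_Diff_singleton[OF B])
    hence c: "card (An n - {B}) < n" using n by (simp add: An_card)
    show "fm_final (n-1) q1 (An n - {B}) {B} P = fm_final (n-1) q2 (An n - {B}) {B} P"
      by (rule fm_local[OF eq finite_Diff[OF An_finite] c])
  qed
  thus ?thesis unfolding TF_def by (simp cong: sum.cong)
qed

lemma TK_support:
  assumes P: "is_part n P" and K: "K \<in> KS n" and T: "TK q n K P \<noteq> 0"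
  shows "card P + sum_mset K \<le> n + size K"
    "n + size K \<le> card P + sum_mset K \<Longrightarrow> image_mset card (mset_set {Y\<in>P. 2 \<le> card Y}) = K"
proof -
  have "(\<Sum>G\<in>collisions (An n) K. fm_final (n-1) q (collide (An n) G) {} P) \<noteq> 0"
    using T unfolding TK_def by auto
  then obtain G where G: "G \<in> collisions (An n) K" and F: "fm_final (n-1) q (collide (An n) G) {} P \<noteq> 0"
    using sum.not_neutral_contains_not_neutral by blast
  let ?S = "collide (An n) G"
  have c1: "card P \<le> card ?S" using fm_card[OF finite_collide[OF An_finite G] F] by simp
  have c2: "card ?S + sum_mset K \<le> n + size K" using card_collide[OF An_finite G] by (simp add: An_card)
  show "card P + sum_mset K \<le> n + size K" using c1 c2 by linarith
  assume "n + size K \<le> card P + sum_mset K"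
  hence cd: "card ?S \<le> card P" using c2 by linarith
  have co: "\<forall>X\<in>?S. \<exists>Y\<in>P. X \<subseteq> Y" using fm_coarse[OF F] by blast
  have "?S = P"
    using part_eq[OF collide_An(1)[OF G] collide_An(2)[OF G] collide_An(3)[OF G], of P] P co cd
    by (auto simp: is_part_def)
  thus "image_mset card (mset_set {Y\<in>P. 2 \<le> card Y}) = K" using collide_An(4)[OF G] by simp
qed

lemma TF_pos:
  assumes Q: "in_Q q" and n: "1 \<le> n"
  shows "0 < TF q n (An n)"
proof -
  have nn: "\<And>b i. 0 \<le> q b i" using Q_nonneg[OF Q] .
  have t: "\<And>B. B \<in> An n \<Longrightarrow> 0 < fm_final (n-1) q (An n - {B}) {B} (An n)"
  proof -
    fix B assume B: "B \<in> An n"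
    have e: "(An n - {B}) \<union> {B} = An n" using B by auto
    have "card (An n - {B}) \<le> n - 1" using B An_finite[of n] by (simp add: An_card)
    thus "0 < fm_final (n-1) q (An n - {B}) {B} (An n)"
      using fm_freeze_pos[of q, OF nn Q_pos[OF Q], of "An n - {B}" "n-1" "{B}"] e An_finite[of n] by simp
  qed
  have "0 < (\<Sum>B\<in>An n. fm_final (n-1) q (An n - {B}) {B} (An n))"
    using t n by (intro sum_pos An_finite) (auto simp: An_def)
  thus ?thesis unfolding TF_def using n by simp
qed

lemma TK_pos:
  assumes Q: "in_Q q" and P: "is_part n P" and cP: "card P < n"
  shows "0 < TK q n (image_mset card (mset_set {Y\<in>P. 2 \<le> card Y})) P"
proof -
  let ?K = "image_mset card (mset_set {Y\<in>P. 2 \<le> card Y})"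
  let ?G = "(\<lambda>Y. (\<lambda>i. {i}) ` Y) ` {Y\<in>P. 2 \<le> card Y}"
  have nn: "\<And>b i. 0 \<le> q b i" using Q_nonneg[OF Q] .
  have G: "?G \<in> collisions (An n) ?K" and cG: "collide (An n) ?G = P"
    using part_collision[OF P] by auto
  have fP: "finite P" using P by (simp add: is_part_def)
  have t: "0 < fm_final (n-1) q (collide (An n) ?G) {} P"
    using fm_freeze_pos[of q, OF nn Q_pos[OF Q], of P "n-1" "{}"] cG fP cP by simp
  have "fm_final (n-1) q (collide (An n) ?G) {} P \<le>
        (\<Sum>G\<in>collisions (An n) ?K. fm_final (n-1) q (collide (An n) G) {} P)"
    by (rule member_le_sum[OF G]) (auto intro: fm_nonneg nn finite_collisions An_finite)
  hence s: "0 < (\<Sum>G\<in>collisions (An n) ?K. fm_final (n-1) q (collide (An n) G) {} P)" using t by linarith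
  have "0 < card (collisions (An n) ?K)"
    using G finite_collisions[OF An_finite] card_gt_0_iff by blast
  thus ?thesis unfolding TK_def using s by simp
qed



definition cK :: "nat multiset \<Rightarrow> nat \<Rightarrow> nat list" where
  "cK K n = sorted_list_of_multiset K @ replicate (n - sum_mset K) 1"

lemma sizes_filter:
  assumes "finite P"
  shows "image_mset card (mset_set {Y\<in>P. 2 \<le> card Y}) = filter_mset (\<lambda>k. 2 \<le> k) (image_mset card (mset_set P))"
  using assms by (simp add: image_mset_filter_mset_swap[symmetric])

lemma cK_props:
  assumes K: "K \<in> KS n"
  shows "cK K n \<in> compositions" "sum_list (cK K n) = n" "is_part n (comp_blocks (cK K n))"
    "card (comp_blocks (cK K n)) = size K + (n - sum_mset K)"
    "image_mset card (mset_set {Y\<in>comp_blocks (cK K n). 2 \<le> card Y}) = K"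
proof -
  have e: "\<forall>k\<in>#K. 2 \<le> k" and s: "sum_mset K \<le> n" using K by (auto simp: KS_def)
  have ms: "mset (cK K n) = K + replicate_mset (n - sum_mset K) 1" by (simp add: cK_def)
  have pos: "\<forall>x\<in>set (cK K n). 0 < x"
  proof
    fix x assume "x \<in> set (cK K n)"
    hence "x \<in># mset (cK K n)" by simp
    thus "0 < x" unfolding ms using e by (auto simp: in_replicate_mset split: if_splits)
  qed
  thus "cK K n \<in> compositions" by (simp add: compositions_def)
  have "sum_list (cK K n) = sum_mset (mset (cK K n))" by (simp add: sum_mset_sum_list)
  also have "\<dots> = n" unfolding ms using s by simp
  finally show sl: "sum_list (cK K n) = n" .
  have cp: "is_part (sum_list (cK K n)) (comp_blocks (cK K n))"
    "image_mset card (mset_set (comp_blocks (cK K n))) = mset (cK K n)"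
    using comp_blocks_props[OF pos] by auto
  show "is_part n (comp_blocks (cK K n))" using cp(1) sl by simp
  have fP: "finite (comp_blocks (cK K n))" using cp(1) by (simp add: is_part_def)
  have "card (comp_blocks (cK K n)) = size (image_mset card (mset_set (comp_blocks (cK K n))))"
    by simp
  also have "\<dots> = size K + (n - sum_mset K)" unfolding cp(2) ms by simp
  finally show "card (comp_blocks (cK K n)) = size K + (n - sum_mset K)" .
  have f1: "filter_mset (\<lambda>k. 2 \<le> k) K = K" using e by (simp add: filter_mset_eq_conv)
  have f2: "filter_mset (\<lambda>k. 2 \<le> k) (replicate_mset m (1::nat)) = {#}" for m
    by (induction m) auto
  show "image_mset card (mset_set {Y\<in>comp_blocks (cK K n). 2 \<le> card Y}) = K"
    unfolding sizes_filter[OF fP] cp(2) ms using f1 f2 by simp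
qed

lemma c0_props:
  shows "replicate n 1 \<in> compositions" "sum_list (replicate n (1::nat)) = n"
    "comp_blocks (replicate n 1) = An n"
proof -
  show "replicate n 1 \<in> compositions" by (simp add: compositions_def)
  show sl: "sum_list (replicate n (1::nat)) = n" by (simp add: sum_list_replicate)
  have pos: "\<forall>x\<in>set (replicate n (1::nat)). 0 < x" by simp
  have cp: "is_part n (comp_blocks (replicate n 1))"
    "image_mset card (mset_set (comp_blocks (replicate n 1))) = mset (replicate n 1)"
    using comp_blocks_props[OF pos] sl by auto
  let ?P = "comp_blocks (replicate n 1)"
  have cP: "card ?P = n"
  proof -
    have "card ?P = size (image_mset card (mset_set ?P))" by simp
    thus ?thesis unfolding cp(2) by simp
  qed
  have co: "\<forall>X\<in>An n. \<exists>Y\<in>?P. X \<subseteq> Y"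
  proof
    fix X assume "X \<in> An n"
    then obtain i where i: "X = {i}" "i \<in> {1..n}" by (auto simp: An_def)
    hence "i \<in> \<Union>?P" using cp(1) by (simp add: is_part_def)
    thus "\<exists>Y\<in>?P. X \<subseteq> Y" using i by blast
  qed
  have ne: "\<forall>X\<in>An n. X \<noteq> {}" by (auto simp: An_def)
  show "comp_blocks (replicate n 1) = An n"
    using part_eq[OF An_finite ne An_Union, of ?P] cp(1) co cP An_card[of n]
    by (auto simp: is_part_def)
qed



lemma level:
  assumes Q1: "in_Q q1" and Q2: "in_Q q2" and n: "1 \<le> n"
    and eq: "\<And>b. b < n \<Longrightarrow> q1 b = q2 b"
    and ep: "\<And>c. c \<in> compositions \<Longrightarrow> eppf q1 c = eppf q2 c"
  shows "q1 n = q2 n"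
proof -
  define D where "D i = q1 n i - q2 n i" for i
  have eqn: "(\<Sum>K\<in>KS n. D (Coll K) * TK q1 n K (comp_blocks c)) + D Freeze * TF q1 n (comp_blocks c) = 0"
    if c: "c \<in> compositions" "sum_list c = n" for c
  proof -
    let ?P = "comp_blocks c"
    have "prob_E q1 n ?P = prob_E q2 n ?P" using ep[OF c(1)] c(2) by (simp add: eppf_def)
    moreover have "(\<Sum>K\<in>KS n. q2 n (Coll K) * TK q2 n K ?P) = (\<Sum>K\<in>KS n. q2 n (Coll K) * TK q1 n K ?P)"
    proof (rule sum.cong)
      fix K assume "K \<in> KS n"
      thus "q2 n (Coll K) * TK q2 n K ?P = q2 n (Coll K) * TK q1 n K ?P" using TK_local[OF eq] by simp
    qed simp
    moreover have "TF q2 n ?P = TF q1 n ?P" using TF_local[OF eq n] by simp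
    ultimately have "(\<Sum>K\<in>KS n. q1 n (Coll K) * TK q1 n K ?P) + q1 n Freeze * TF q1 n ?P =
           (\<Sum>K\<in>KS n. q2 n (Coll K) * TK q1 n K ?P) + q2 n Freeze * TF q1 n ?P"
      unfolding prob_decomp[OF n] by simp
    thus ?thesis unfolding D_def by (simp add: left_diff_distrib sum_subtractf)
  qed
  have DF: "D Freeze = 0"
  proof -
    have z: "TK q1 n K (An n) = 0" if K: "K \<in> KS n" for K
    proof (rule ccontr)
      assume "TK q1 n K (An n) \<noteq> 0"
      have ip: "is_part n (An n)" using c0_props(3)[of n] comp_blocks_props[of "replicate n 1"] c0_props(2)[of n] by simp
      have "card (An n) + sum_mset K \<le> n + size K" using TK_support(1)[OF ip K \<open>TK q1 n K (An n) \<noteq> 0\<close>] .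
      thus False using KS_mu[OF K] by (simp add: An_card)
    qed
    have "D Freeze * TF q1 n (An n) = 0" using eqn[OF c0_props(1) c0_props(2), unfolded c0_props(3)] z by simp
    thus ?thesis using TF_pos[OF Q1 n] by simp
  qed
  have DK: "D (Coll K) = 0" if "K \<in> KS n" for K
    using that
  proof (induction K rule: measure_induct_rule[of "\<lambda>K. sum_mset K - size K"])
    case (less K)
    let ?P = "comp_blocks (cK K n)"
    have K: "K \<in> KS n" by fact
    have sK: "sum_mset K \<le> n" using K by (simp add: KS_def)
    have mu: "size K < sum_mset K" using KS_mu[OF K] .
    have ip: "is_part n ?P" and cP: "card ?P = size K + (n - sum_mset K)"
      and sz: "image_mset card (mset_set {Y\<in>?P. 2 \<le> card Y}) = K"
      using cK_props[OF K] by auto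
    have other: "D (Coll K') * TK q1 n K' ?P = 0" if K': "K' \<in> KS n - {K}" for K'
    proof (cases "TK q1 n K' ?P = 0")
      case True thus ?thesis by simp
    next
      case False
      have K'n: "K' \<in> KS n" using K' by simp
      have s1: "card ?P + sum_mset K' \<le> n + size K'" using TK_support(1)[OF ip K'n False] .
      have mu': "size K' < sum_mset K'" using KS_mu[OF K'n] .
      show ?thesis
      proof (cases "sum_mset K' - size K' < sum_mset K - size K")
        case True
        have "D (Coll K') = 0" by (rule less.IH[OF True K'n])
        thus ?thesis by simp
      next
        case ge: False
        have "n + size K' \<le> card ?P + sum_mset K'" using ge cP sK mu mu' by linarith
        hence "image_mset card (mset_set {Y\<in>?P. 2 \<le> card Y}) = K'"
          using TK_support(2)[OF ip K'n False] by blast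
        hence "K' = K" using sz by simp
        thus ?thesis using K' by simp
      qed
    qed
    have "(\<Sum>K'\<in>KS n. D (Coll K') * TK q1 n K' ?P) = D (Coll K) * TK q1 n K ?P
            + (\<Sum>K'\<in>KS n - {K}. D (Coll K') * TK q1 n K' ?P)"
      by (rule sum.remove[OF finite_KS K])
    also have "(\<Sum>K'\<in>KS n - {K}. D (Coll K') * TK q1 n K' ?P) = 0"
      using other by (intro sum.neutral) blast
    finally have "D (Coll K) * TK q1 n K ?P = 0"
      using eqn[OF cK_props(1)[OF K] cK_props(2)[OF K]] DF by simp
    moreover have "card ?P < n" using cP mu sK by linarith
    hence "0 < TK q1 n K ?P" using TK_pos[OF Q1 ip] sz by simp
    ultimately show ?case by simp
  qed
  show ?thesis
  proof
    fix i show "q1 n i = q2 n i"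
    proof (cases i)
      case Freeze thus ?thesis using DF by (simp add: D_def)
    next
      case (Coll K)
      show ?thesis
      proof (cases "K \<in> KS n")
        case True thus ?thesis using DK Coll by (simp add: D_def)
      next
        case False
        hence nv: "i \<notin> valid_idx n" using Coll KS_eq[of n] n by auto
        have "coeff_family n (q1 n)" "coeff_family n (q2 n)" using Q1 Q2 n by (auto simp: in_Q_def)
        thus ?thesis using nv by (simp add: coeff_family_def)
      qed
    qed
  qed
qed

theorem lemma6p3:
  "inj_on (\<lambda>q. restrict (eppf q) compositions) {q. in_Q q}"
proof (rule inj_onI)
  fix q1 q2 assume Q1: "q1 \<in> {q. in_Q q}" and Q2: "q2 \<in> {q. in_Q q}"
    and h: "restrict (eppf q1) compositions = restrict (eppf q2) compositions"
  have Q1': "in_Q q1" and Q2': "in_Q q2" using Q1 Q2 by auto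
  have ep: "eppf q1 c = eppf q2 c" if "c \<in> compositions" for c
    using fun_cong[OF h, of c] that by simp
  have "q1 n = q2 n" for n
  proof (induction n rule: less_induct)
    case (less n)
    show ?case
    proof (cases "n = 0")
      case True thus ?thesis using Q1' Q2' by (simp add: in_Q_def)
    next
      case False
      thus ?thesis using level[OF Q1' Q2' _ less.IH ep] by simp
    qed
  qed
  thus "q1 = q2" by (rule ext)
qed

end
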